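(* In the setting below, for every $n\in\mathbb{N}_0$ there exists a constant $C_{2n}\in(0,1)$, independent of $N$, such that $d(t_{2n+1})\le C_{2n}\,d(t_{2n})$.
   Context: Setting: $N\ge2$; $\psi:\mathbb{R}^d\times\mathbb{R}^d\to\mathbb{R}$ positive, bounded, continuous, $K:=\|\psi\|_\infty$; $\{t_n\}_{n\in\mathbb{N}_0}$ increasing, nonnegative, $t_0=0$, $t_n\to\infty$; $\alpha(0)=1$, $\alpha=1$ on $(t_{2n},t_{2n+1})$, $\alpha=-1$ on $[t_{2n+1},t_{2n+2}]$; $\{x_i\}$ solves $x_i'(t)=\frac1{N-1}\sum_{j\ne i}\alpha(t)\psi(x_i(t),x_j(t))(x_j(t)-x_i(t))$, $t>0$, $x_i(0)=x_i^0\in\mathbb{R}^d$ (continuous, $C^1$ on each $(t_n,t_{n+1})$). $d(t):=\max_{i,j}|x_i(t)-x_j(t)|$. Standing assumptions: $t_{2n+2}-t_{2n+1}<\frac{\ln 2}{K}$ for all $n$; $\sum_{p\ge0}\ln\frac{e^{K(t_{2p+2}-t_{2p+1})}}{2-e^{K(t_{2p+2}-t_{2p+1})}}<\infty$; $\sum_{p\ge0}\ln\max\{1-e^{-K(t_{2p+1}-t_{2p})},1-\frac{\psi_0}{K}(1-e^{-K(t_{2p+1}-t_{2p})})\}=-\infty$, with $\psi_0=\min_{|y|,|z|\le M^0}\psi(y,z)$, $M^0=e^{K\sum_{p}(t_{2p+2}-t_{2p+1})}\max_i|x_i^0|$. *)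

theory Defs
  imports "HOL-Analysis.Analysis"
begin

definition alpha_sw :: "(nat \<Rightarrow> real) \<Rightarrow> real \<Rightarrow> real" where
  "alpha_sw t s = (if \<exists>n. t (2*n+1) \<le> s \<and> s \<le> t (2*n+2) then -1 else 1)"

definition psi_sup :: "('a \<Rightarrow> 'a \<Rightarrow> real) \<Rightarrow> real" where
  "psi_sup \<psi> = (SUP p\<in>UNIV. \<psi> (fst p) (snd p))"

definition is_solution ::
  "nat \<Rightarrow> ('a::real_normed_vector \<Rightarrow> 'a \<Rightarrow> real) \<Rightarrow> (nat \<Rightarrow> real) \<Rightarrow> (nat \<Rightarrow> real \<Rightarrow> 'a) \<Rightarrow> bool" where
  "is_solution N \<psi> t x \<longleftrightarrow>
     (\<forall>i<N. continuous_on {0..} (x i)) \<and>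
     (\<forall>i<N. \<forall>k. \<forall>s\<in>{t k<..<t (Suc k)}.
        (x i has_vector_derivative
           ((1 / (real N - 1)) *\<^sub>R
             (\<Sum>j\<in>{..<N}-{i}. (alpha_sw t s * \<psi> (x i s) (x j s)) *\<^sub>R (x j s - x i s)))) (at s))"

definition diam_ag :: "nat \<Rightarrow> (nat \<Rightarrow> real \<Rightarrow> 'a::real_normed_vector) \<Rightarrow> real \<Rightarrow> real" where
  "diam_ag N x s = Max {norm (x i s - x j s) | i j. i < N \<and> j < N}"

definition M0 :: "nat \<Rightarrow> real \<Rightarrow> (nat \<Rightarrow> real) \<Rightarrow> (nat \<Rightarrow> real \<Rightarrow> 'a::real_normed_vector) \<Rightarrow> real" where
  "M0 N K t x = exp (K * (\<Sum>p. t (2*p+2) - t (2*p+1))) * Max {norm (x i 0) | i. i < N}"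

definition psi_min :: "('a::real_normed_vector \<Rightarrow> 'a \<Rightarrow> real) \<Rightarrow> real \<Rightarrow> real" where
  "psi_min \<psi> M = (INF p\<in>cball 0 M \<times> cball 0 M. \<psi> (fst p) (snd p))"

end

theory Submission
  imports Defs
begin


lemma touch_lemma:
  fixes f :: "nat \<Rightarrow> real \<Rightarrow> real" and h :: "real \<Rightarrow> real"
  assumes cont: "\<And>i. i<N \<Longrightarrow> continuous_on {a..b} (f i)"
  and hcont: "continuous_on {a..b} h"
  and start: "\<And>i. i<N \<Longrightarrow> f i a < h a"
  and touch: "\<And>s i. s\<in>{a<..<b} \<Longrightarrow> i<N \<Longrightarrow> (\<forall>j<N. f j s \<le> h s) \<Longrightarrow> f i s = h s \<Longrightarrow>
     \<exists>d e. (f i has_real_derivative d) (at s) \<and> (h has_real_derivative e) (at s) \<and> d < e"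
  and i: "i < N" and s: "s \<in> {a..b}"
  shows "f i s \<le> h s"
proof (rule ccontr)
  assume "\<not> f i s \<le> h s"
  hence fs: "h s < f i s" by simp
  define S where "S = {r\<in>{a..s}. \<exists>j<N. h r \<le> f j r}"
  have sS: "s \<in> S" using s fs unfolding S_def by (auto intro!: exI[of _ i] i)
  have cS: "closed S"
  proof -
    have "S = (\<Union>j\<in>{..<N}. {r\<in>{a..s}. h r \<le> f j r})" unfolding S_def by auto
    moreover have "closed {r\<in>{a..s}. h r \<le> f j r}" if "j<N" for j
      apply (rule continuous_on_closed_Collect_le)
      using cont[OF that] hcont s by (auto elim!: continuous_on_subset)
    ultimately show ?thesis by auto
  qed
  have bS: "bdd_below S" unfolding S_def by (auto intro!: bdd_belowI[of _ a])
  define \<tau> where "\<tau> = Inf S"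
  have tS: "\<tau> \<in> S" unfolding \<tau>_def using closed_contains_Inf[OF _ bS cS] sS by auto
  have tle: "\<tau> \<le> r" if "r \<in> S" for r unfolding \<tau>_def using cInf_lower[OF that bS] .
  have ta: "a \<le> \<tau>" "\<tau> \<le> s" using tS unfolding S_def by auto
  obtain k where k: "k<N" "h \<tau> \<le> f k \<tau>" using tS unfolding S_def by auto
  have "\<tau> \<noteq> a" using start[OF k(1)] k(2) by auto
  hence ta2: "a < \<tau>" using ta by auto
  have below: "f j r < h r" if "j<N" "a \<le> r" "r < \<tau>" for j r
  proof (rule ccontr)
    assume "\<not> f j r < h r"
    hence "r \<in> S" unfolding S_def using that ta by auto
    from tle[OF this] that show False by auto
  qed
  have atmost: "f j \<tau> \<le> h \<tau>" if j: "j<N" for j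
  proof -
    have cl: "closed {r\<in>{a..\<tau>}. f j r \<le> h r}"
      apply (rule continuous_on_closed_Collect_le)
      using cont[OF j] hcont ta s by (auto elim!: continuous_on_subset)
    have "{a..<\<tau>} \<subseteq> {r\<in>{a..\<tau>}. f j r \<le> h r}" using below[OF j] by force
    hence "closure {a..<\<tau>} \<subseteq> {r\<in>{a..\<tau>}. f j r \<le> h r}" using cl closure_minimal by blast
    hence "{a..\<tau>} \<subseteq> {r\<in>{a..\<tau>}. f j r \<le> h r}" using ta2 by simp
    moreover have "\<tau> \<in> {a..\<tau>}" using ta2 by simp
    ultimately have "\<tau> \<in> {r\<in>{a..\<tau>}. f j r \<le> h r}" by blast
    thus ?thesis by simp
  qed
  have eq: "f k \<tau> = h \<tau>" using atmost[OF k(1)] k(2) by auto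
  have "\<tau> \<noteq> s" using atmost[OF i] fs by auto
  hence tin: "\<tau> \<in> {a<..<b}" using ta ta2 s by auto
  obtain d e where de: "(f k has_real_derivative d) (at \<tau>)" "(h has_real_derivative e) (at \<tau>)" "d < e"
    using touch[OF tin k(1) _ eq] atmost by blast
  have "((\<lambda>r. f k r - h r) has_real_derivative d - e) (at \<tau>)" using de by (intro derivative_intros)
  from DERIV_neg_dec_left[OF this] de(3) obtain \<delta> where dl: "\<delta> > 0"
    "\<And>\<eta>. \<eta> > 0 \<Longrightarrow> \<eta> < \<delta> \<Longrightarrow> f k \<tau> - h \<tau> < f k (\<tau> - \<eta>) - h (\<tau> - \<eta>)" by auto
  define \<eta> where "\<eta> = min (\<delta>/2) ((\<tau> - a)/2)"
  have "\<eta> > 0" "\<eta> < \<delta>" using dl(1) ta2 unfolding \<eta>_def by auto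
  from dl(2)[OF this] eq have hh: "h (\<tau> - \<eta>) < f k (\<tau> - \<eta>)" by auto
  have "\<eta> \<le> (\<tau>-a)/2" unfolding \<eta>_def by (rule min.cobounded2)
  moreover have "a \<le> \<tau> - \<eta>" "\<tau> - \<eta> < \<tau>" using ta2 \<open>\<eta> > 0\<close> calculation by auto
  ultimately show False using below[OF k(1)] hh by fastforce
qed


lemma vd_inner:
  fixes x :: "real \<Rightarrow> 'a::real_inner"
  assumes "(x has_vector_derivative x') (at s)"
  shows "((\<lambda>s. inner v (x s)) has_real_derivative inner v x') (at s)"
  using assms unfolding has_real_derivative_iff_has_vector_derivative has_vector_derivative_def
  by (auto intro!: derivative_eq_intros simp: inner_scaleR_right)
lemma vd_sq:
  fixes x :: "real \<Rightarrow> 'a::real_inner"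
  assumes "(x has_vector_derivative x') (at s)"
  shows "((\<lambda>s. inner (x s) (x s)) has_real_derivative 2 * inner (x s) x') (at s)"
  using assms unfolding has_real_derivative_iff_has_vector_derivative has_vector_derivative_def
  by (auto intro!: derivative_eq_intros simp: inner_scaleR_right inner_commute)

lemma le_eps_exp:
  fixes y mu :: real
  assumes "\<And>e. e > 0 \<Longrightarrow> y \<le> mu + e * q" and "q > 0"
  shows "y \<le> mu"
proof (rule ccontr)
  assume "\<not> y \<le> mu"
  hence "(y - mu) / (2*q) > 0" using assms(2) by auto
  from assms(1)[OF this] have "y \<le> mu + (y-mu)/2" using assms(2) by (simp add: field_simps)
  thus False using \<open>\<not> y \<le> mu\<close> by (simp add: field_simps)
qed

lemma invariance:
  fixes x :: "nat \<Rightarrow> real \<Rightarrow> 'a::real_inner" and c :: "nat \<Rightarrow> nat \<Rightarrow> real \<Rightarrow> real"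
  assumes cont: "\<And>j. j<N \<Longrightarrow> continuous_on {a..b} (x j)"
  and deriv: "\<And>j s. j<N \<Longrightarrow> s\<in>{a<..<b} \<Longrightarrow> (x j has_vector_derivative
      (1/(real N-1)) *\<^sub>R (\<Sum>l\<in>{..<N}-{j}. c j l s *\<^sub>R (x l s - x j s))) (at s)"
  and cpos: "\<And>j l s. j<N \<Longrightarrow> l<N \<Longrightarrow> s\<in>{a<..<b} \<Longrightarrow> 0 \<le> c j l s"
  and N2: "2 \<le> N"
  and init: "\<And>l. l<N \<Longrightarrow> inner v (x l a) \<le> \<mu>"
  and j: "j<N" and s: "s\<in>{a..b}"
  shows "inner v (x j s) \<le> \<mu>"
proof (rule le_eps_exp[where q = "exp s"])
  fix \<epsilon> :: real assume ep: "\<epsilon> > 0"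
  show "inner v (x j s) \<le> \<mu> + \<epsilon> * exp s"
  proof (rule touch_lemma[where f = "\<lambda>j s. inner v (x j s)" and h = "\<lambda>s. \<mu> + \<epsilon> * exp s" and N = N and a = a and b = b, OF _ _ _ _ j s])
    show "continuous_on {a..b} (\<lambda>s. inner v (x i s))" if "i<N" for i
      using cont[OF that] by (intro continuous_intros)
    show "continuous_on {a..b} (\<lambda>s. \<mu> + \<epsilon> * exp s)" by (intro continuous_intros)
    show "inner v (x i a) < \<mu> + \<epsilon> * exp a" if "i<N" for i using init[OF that] ep by (smt (verit) exp_gt_zero mult_pos_pos)
    fix r i assume r: "r\<in>{a<..<b}" and i: "i<N" and all: "\<forall>l<N. inner v (x l r) \<le> \<mu> + \<epsilon> * exp r"
      and eq: "inner v (x i r) = \<mu> + \<epsilon> * exp r"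
    let ?d = "inner v ((1/(real N-1)) *\<^sub>R (\<Sum>l\<in>{..<N}-{i}. c i l r *\<^sub>R (x l r - x i r)))"
    have d1: "((\<lambda>s. inner v (x i s)) has_real_derivative ?d) (at r)" by (rule vd_inner[OF deriv[OF i r]])
    have d2: "((\<lambda>s. \<mu> + \<epsilon> * exp s) has_real_derivative \<epsilon> * exp r) (at r)"
      by (auto intro!: derivative_eq_intros)
    have "?d = (1/(real N-1)) * (\<Sum>l\<in>{..<N}-{i}. c i l r * (inner v (x l r) - inner v (x i r)))"
      by (simp add: inner_sum_right inner_diff_right)
    also have "\<dots> \<le> 0"
    proof -
      have "(\<Sum>l\<in>{..<N}-{i}. c i l r * (inner v (x l r) - inner v (x i r))) \<le> 0"
        apply (rule sum_nonpos)
        apply (rule mult_nonneg_nonpos)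
        using cpos i r all eq by auto
      moreover have "1/(real N-1) \<ge> 0" using N2 by auto
      ultimately show ?thesis by (intro mult_nonneg_nonpos)
    qed
    finally have "?d < \<epsilon> * exp r" using ep by (smt (verit) exp_gt_zero mult_pos_pos)
    thus "\<exists>d e. ((\<lambda>s. inner v (x i s)) has_real_derivative d) (at r) \<and> ((\<lambda>s. \<mu> + \<epsilon> * exp s) has_real_derivative e) (at r) \<and> d < e"
      using d1 d2 by blast
  qed
qed simp


lemma nn: "norm y * norm y = inner y y"
  by (simp add: power2_norm_eq_inner[symmetric] power2_eq_square)

lemma sq_le: "0 \<le> (z::real) \<Longrightarrow> y*y \<le> z*z \<Longrightarrow> y \<le> z"
  by (metis abs_le_square_iff abs_of_nonneg abs_ge_self order_trans power2_eq_square)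
lemma sq_eq: "0 \<le> (z::real) \<Longrightarrow> 0 \<le> y \<Longrightarrow> y*y = z*z \<Longrightarrow> y = z"
  by (metis abs_of_nonneg power2_eq_square power2_eq_iff_nonneg)

lemma phase_bound:
  fixes x :: "nat \<Rightarrow> real \<Rightarrow> 'a::real_inner" and c :: "nat \<Rightarrow> nat \<Rightarrow> real \<Rightarrow> real"
  assumes cont: "\<And>j. j<N \<Longrightarrow> continuous_on {a..b} (x j)"
  and deriv: "\<And>j s. j<N \<Longrightarrow> s\<in>{a<..<b} \<Longrightarrow> (x j has_vector_derivative
      (1/(real N-1)) *\<^sub>R (\<Sum>l\<in>{..<N}-{j}. c j l s *\<^sub>R (x l s - x j s))) (at s)"
  and cb: "\<And>j l s. j<N \<Longrightarrow> l<N \<Longrightarrow> s\<in>{a<..<b} \<Longrightarrow> \<bar>c j l s\<bar> \<le> K"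
  and N2: "2 \<le> N" and K0: "K \<ge> 0" and B0: "B \<ge> 0"
  and init: "\<And>l. l<N \<Longrightarrow> norm (x l a) \<le> B"
  and j: "j<N" and s: "s\<in>{a..b}"
  shows "norm (x j s) \<le> B * exp ((2*K+1)*(s-a))"
proof (rule le_eps_exp[where q = "exp ((2*K+1)*(s-a))"])
  fix \<epsilon> :: real assume ep: "\<epsilon> > 0"
  define H where "H r = (B + \<epsilon>) * exp ((2*K+1)*(r-a))" for r
  have Hpos: "H r > 0" for r unfolding H_def using B0 ep by auto
  have "inner (x j s) (x j s) \<le> H s * H s"
  proof (rule touch_lemma[where f = "\<lambda>j s. inner (x j s) (x j s)" and h = "\<lambda>s. H s * H s" and N = N and a = a and b = b, OF _ _ _ _ j s])
    show "continuous_on {a..b} (\<lambda>s. inner (x i s) (x i s))" if "i<N" for i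
      using cont[OF that] by (intro continuous_intros)
    show "continuous_on {a..b} (\<lambda>s. H s * H s)" unfolding H_def by (intro continuous_intros)
    show "inner (x i a) (x i a) < H a * H a" if "i<N" for i
    proof -
      have "inner (x i a) (x i a) = norm (x i a) * norm (x i a)" by (simp add: power2_norm_eq_inner[symmetric] power2_eq_square)
      also have "\<dots> \<le> B * B" using init[OF that] B0 by (intro mult_mono) auto
      also have "\<dots> < H a * H a" unfolding H_def using B0 ep by (simp add: mult_strict_mono)
      finally show ?thesis .
    qed
    fix r i assume r: "r\<in>{a<..<b}" and i: "i<N" and all: "\<forall>l<N. inner (x l r) (x l r) \<le> H r * H r"
      and eq: "inner (x i r) (x i r) = H r * H r"
    have nl: "norm (x l r) \<le> H r" if "l<N" for l
    proof -
      have "inner (x l r) (x l r) \<le> H r * H r" using all that by blast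
      hence "norm (x l r) * norm (x l r) \<le> H r * H r" using nn[of "x l r"] by linarith
      thus ?thesis by (rule sq_le[OF less_imp_le[OF Hpos[of r]]])
    qed
    have ni: "norm (x i r) = H r"
    proof -
      have "norm (x i r) * norm (x i r) = H r * H r" using eq nn[of "x i r"] by linarith
      thus ?thesis by (rule sq_eq[OF less_imp_le[OF Hpos[of r]] norm_ge_zero])
    qed
    define F where "F = (1/(real N-1)) *\<^sub>R (\<Sum>l\<in>{..<N}-{i}. c i l r *\<^sub>R (x l r - x i r))"
    have d1: "((\<lambda>s. inner (x i s) (x i s)) has_real_derivative 2 * inner (x i r) F) (at r)"
      unfolding F_def by (rule vd_sq[OF deriv[OF i r]])
    have d2: "((\<lambda>s. H s * H s) has_real_derivative ((2*K+1) * H r) * H r + H r * ((2*K+1) * H r)) (at r)"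
      unfolding H_def by (auto intro!: derivative_eq_intros)
    have nF: "norm F \<le> 2 * K * H r"
    proof -
      have "norm (\<Sum>l\<in>{..<N}-{i}. c i l r *\<^sub>R (x l r - x i r)) \<le> (\<Sum>l\<in>{..<N}-{i}. norm (c i l r *\<^sub>R (x l r - x i r)))"
        by (rule norm_sum)
      also have "\<dots> \<le> (\<Sum>l\<in>{..<N}-{i}. 2 * K * H r)"
      proof (rule sum_mono)
        fix l assume l: "l \<in> {..<N}-{i}"
        have "norm (x l r - x i r) \<le> 2 * H r" using norm_triangle_ineq4[of "x l r" "x i r"] nl[of l] nl[OF i] l by auto
        hence "\<bar>c i l r\<bar> * norm (x l r - x i r) \<le> K * (2 * H r)" using cb[OF i _ r, of l] l K0
          by (intro mult_mono) auto
        thus "norm (c i l r *\<^sub>R (x l r - x i r)) \<le> 2 * K * H r" by simp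
      qed
      also have "\<dots> = (real N - 1) * (2 * K * H r)" using i N2 by simp
      finally have "norm (\<Sum>l\<in>{..<N}-{i}. c i l r *\<^sub>R (x l r - x i r)) \<le> (real N - 1) * (2 * K * H r)" .
      moreover have "real N - 1 > 0" using N2 by auto
      ultimately show ?thesis unfolding F_def by (simp add: field_simps)
    qed
    have "2 * inner (x i r) F \<le> 2 * (norm (x i r) * norm F)" using norm_cauchy_schwarz[of "x i r" F] by simp
    also have "\<dots> \<le> 2 * (H r * (2 * K * H r))" using ni nF Hpos[of r] by (simp add: mult_left_mono)
    also have "\<dots> < ((2*K+1) * H r) * H r + H r * ((2*K+1) * H r)" using Hpos[of r] by (simp add: algebra_simps)
    finally show "\<exists>d e. ((\<lambda>s. inner (x i s) (x i s)) has_real_derivative d) (at r) \<and> ((\<lambda>s. H s * H s) has_real_derivative e) (at r) \<and> d < e"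
      using d1 d2 by blast
  qed
  hence "norm (x j s) * norm (x j s) \<le> H s * H s" using nn[of "x j s"] by linarith
  hence "norm (x j s) \<le> H s" by (rule sq_le[OF less_imp_le[OF Hpos[of s]]])
  thus "norm (x j s) \<le> B * exp ((2*K+1)*(s-a)) + \<epsilon> * exp ((2*K+1)*(s-a))" unfolding H_def by (simp add: algebra_simps)
qed simp


lemma finite_pairs: "finite {norm (x i a - x j a) | i j. i < (N::nat) \<and> j < N}"
  by (rule finite_image_set2) auto

lemma key_ineq:
  fixes c :: "nat \<Rightarrow> real" and Y :: "nat \<Rightarrow> real"
  assumes N2: "2 \<le> N" and i: "i<N" and k: "k<N"
  and cb: "\<And>l. l<N \<Longrightarrow> \<psi>0 \<le> c l \<and> c l \<le> K"
  and db: "\<And>l. l<N \<Longrightarrow> \<psi>0 \<le> d l \<and> d l \<le> K"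
  and Yb: "\<And>l. l<N \<Longrightarrow> m \<le> Y l \<and> Y l \<le> M"
  and p0: "\<psi>0 > 0"
  shows "(1/(real N-1)) * (\<Sum>l\<in>{..<N}-{i}. c l * (Y i - Y l)) + (1/(real N-1)) * (\<Sum>l\<in>{..<N}-{k}. d l * (Y l - Y k))
     \<ge> \<psi>0 * (M - m) - (\<psi>0 + K) * ((M - Y i) + (Y k - m))"
proof -
  define n1 where "n1 = real N - 1"
  have n1: "n1 \<ge> 1" using N2 unfolding n1_def by auto
  have cardS: "\<And>j. j<N \<Longrightarrow> real (card ({..<N}-{j})) = n1" unfolding n1_def using N2 by auto
  have A: "(\<Sum>l\<in>{..<N}-{k}. d l * (Y l - Y k)) \<ge> (\<Sum>l\<in>{..<N}-{k}. \<psi>0 * (Y l - m) - K * (Y k - m))"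
  proof (rule sum_mono)
    fix l assume l: "l \<in> {..<N}-{k}"
    have "d l * (Y l - m) \<ge> \<psi>0 * (Y l - m)" using db[of l] Yb[of l] l by (intro mult_right_mono) auto
    moreover have "d l * (Y k - m) \<le> K * (Y k - m)" using db[of l] Yb[of k] l k by (intro mult_right_mono) auto
    ultimately show "\<psi>0 * (Y l - m) - K * (Y k - m) \<le> d l * (Y l - Y k)" by (simp add: algebra_simps)
  qed
  have B: "(\<Sum>l\<in>{..<N}-{i}. c l * (Y i - Y l)) \<ge> (\<Sum>l\<in>{..<N}-{i}. \<psi>0 * (M - Y l) - K * (M - Y i))"
  proof (rule sum_mono)
    fix l assume l: "l \<in> {..<N}-{i}"
    have "c l * (M - Y l) \<ge> \<psi>0 * (M - Y l)" using cb[of l] Yb[of l] l by (intro mult_right_mono) auto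
    moreover have "c l * (M - Y i) \<le> K * (M - Y i)" using cb[of l] Yb[of i] l i by (intro mult_right_mono) auto
    ultimately show "\<psi>0 * (M - Y l) - K * (M - Y i) \<le> c l * (Y i - Y l)" by (simp add: algebra_simps)
  qed
  define Sa where "Sa = (\<Sum>l<N. Y l - m)"
  define Sb where "Sb = (\<Sum>l<N. M - Y l)"
  have SaSb: "Sa + Sb = real N * (M - m)" unfolding Sa_def Sb_def
    by (simp add: sum.distrib[symmetric])
  have A2: "(\<Sum>l\<in>{..<N}-{k}. \<psi>0 * (Y l - m) - K * (Y k - m)) = \<psi>0 * (Sa - (Y k - m)) - n1 * K * (Y k - m)"
  proof -
    have "(\<Sum>l\<in>{..<N}-{k}. \<psi>0 * (Y l - m) - K * (Y k - m)) = \<psi>0 * (\<Sum>l\<in>{..<N}-{k}. Y l - m) - real (card ({..<N}-{k})) * (K * (Y k - m))"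
      by (simp add: sum_subtractf sum_distrib_left right_diff_distrib mult_ac)
    moreover have "(\<Sum>l\<in>{..<N}-{k}. Y l - m) = Sa - (Y k - m)" unfolding Sa_def using k by (simp add: sum_diff1)
    ultimately show ?thesis using cardS[OF k] by simp
  qed
  have B2: "(\<Sum>l\<in>{..<N}-{i}. \<psi>0 * (M - Y l) - K * (M - Y i)) = \<psi>0 * (Sb - (M - Y i)) - n1 * K * (M - Y i)"
  proof -
    have "(\<Sum>l\<in>{..<N}-{i}. \<psi>0 * (M - Y l) - K * (M - Y i)) = \<psi>0 * (\<Sum>l\<in>{..<N}-{i}. M - Y l) - real (card ({..<N}-{i})) * (K * (M - Y i))"
      by (simp add: sum_subtractf sum_distrib_left right_diff_distrib mult_ac)
    moreover have "(\<Sum>l\<in>{..<N}-{i}. M - Y l) = Sb - (M - Y i)" unfolding Sb_def using i by (simp add: sum_diff1)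
    ultimately show ?thesis using cardS[OF i] by simp
  qed
  define u where "u = (M - Y i) + (Y k - m)"
  have u0: "u \<ge> 0" using Yb[OF i] Yb[OF k] unfolding u_def by auto
  have D0: "M - m \<ge> 0" using Yb[OF i] by auto
  have tot: "(\<Sum>l\<in>{..<N}-{i}. c l * (Y i - Y l)) + (\<Sum>l\<in>{..<N}-{k}. d l * (Y l - Y k))
     \<ge> \<psi>0 * (real N * (M - m) - u) - n1 * K * u"
  proof -
    have A3: "(\<Sum>l\<in>{..<N}-{k}. d l * (Y l - Y k)) \<ge> \<psi>0 * (Sa - (Y k - m)) - n1 * K * (Y k - m)" using A A2 by linarith
    have B3: "(\<Sum>l\<in>{..<N}-{i}. c l * (Y i - Y l)) \<ge> \<psi>0 * (Sb - (M - Y i)) - n1 * K * (M - Y i)" using B B2 by linarith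
    have eq: "\<psi>0 * (Sa - (Y k - m)) - n1 * K * (Y k - m) + (\<psi>0 * (Sb - (M - Y i)) - n1 * K * (M - Y i))
       = \<psi>0 * (real N * (M - m) - u) - n1 * K * u" unfolding u_def SaSb[symmetric] by (simp add: algebra_simps)
    show ?thesis using A3 B3 eq by linarith
  qed
  have "\<psi>0 * ((M - m) + (n1 - 1) * u) \<ge> 0" using p0 D0 u0 n1 by (intro mult_nonneg_nonneg) auto
  hence "\<psi>0 * (real N * (M - m) - u) - n1 * K * u \<ge> n1 * (\<psi>0 * (M - m) - (\<psi>0 + K) * u)"
    unfolding n1_def by (simp add: algebra_simps)
  with tot have "(\<Sum>l\<in>{..<N}-{i}. c l * (Y i - Y l)) + (\<Sum>l\<in>{..<N}-{k}. d l * (Y l - Y k))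
     \<ge> n1 * (\<psi>0 * (M - m) - (\<psi>0 + K) * u)" by linarith
  hence "(1/n1) * ((\<Sum>l\<in>{..<N}-{i}. c l * (Y i - Y l)) + (\<Sum>l\<in>{..<N}-{k}. d l * (Y l - Y k)))
     \<ge> \<psi>0 * (M - m) - (\<psi>0 + K) * u" using n1 by (simp add: field_simps)
  thus ?thesis unfolding n1_def u_def by (simp add: algebra_simps)
qed


lemma contraction:
  fixes x :: "nat \<Rightarrow> real \<Rightarrow> 'a::real_inner" and c :: "nat \<Rightarrow> nat \<Rightarrow> real \<Rightarrow> real"
  assumes cont: "\<And>j. j<N \<Longrightarrow> continuous_on {a..b} (x j)"
  and deriv: "\<And>j s. j<N \<Longrightarrow> s\<in>{a<..<b} \<Longrightarrow> (x j has_vector_derivative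
      (1/(real N-1)) *\<^sub>R (\<Sum>l\<in>{..<N}-{j}. c j l s *\<^sub>R (x l s - x j s))) (at s)"
  and cb: "\<And>j l s. j<N \<Longrightarrow> l<N \<Longrightarrow> s\<in>{a<..<b} \<Longrightarrow> \<psi>0 \<le> c j l s \<and> c j l s \<le> K"
  and N2: "2 \<le> N" and p0: "\<psi>0 > 0" and K0: "K > 0" and ab: "a < b" and i: "i<N" and k: "k<N"
  shows "norm (x i b - x k b) \<le> (1 - \<psi>0/(\<psi>0+K) * (1 - exp (-(\<psi>0+K)*(b-a)))) * diam_ag N x a"
proof -
  define L where "L = \<psi>0 + K"
  have L0: "L > 0" using p0 K0 unfolding L_def by auto
  define E where "E = exp (L*(b-a))"
  have E1: "E > 1" unfolding E_def using L0 ab by auto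
  have Einv: "exp (-(\<psi>0+K)*(b-a)) = 1/E"
  proof -
    have "exp (-(\<psi>0+K)*(b-a)) = exp (- (L*(b-a)))" unfolding L_def by (simp add: algebra_simps)
    also have "\<dots> = 1/E" unfolding E_def by (simp add: exp_minus inverse_eq_divide)
    finally show ?thesis .
  qed
  define C where "C = 1 - \<psi>0/L * (1 - 1/E)"
  have C0: "C \<ge> 0"
  proof -
    have "\<psi>0/L \<le> 1" using L0 K0 unfolding L_def by auto
    moreover have "1 - 1/E \<le> 1" "0 \<le> 1 - 1/E" using E1 by auto
    ultimately have "\<psi>0/L * (1 - 1/E) \<le> 1" using p0 L0 by (intro mult_le_one) auto
    thus ?thesis unfolding C_def by simp
  qed
  have Ceq: "(1 - \<psi>0/(\<psi>0+K) * (1 - exp (-(\<psi>0+K)*(b-a)))) = C" unfolding C_def Einv L_def by simp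
  define D where "D = diam_ag N x a"
  have fin: "finite {norm (x i a - x j a) | i j. i < N \<and> j < N}" by (rule finite_pairs)
  have Dge: "norm (x p a - x q a) \<le> D" if "p<N" "q<N" for p q
    unfolding D_def diam_ag_def by (rule Max_ge[OF fin]) (use that in blast)
  have D0: "D \<ge> 0" using Dge[OF i i] by simp
  define w where "w = x i b - x k b"
  show ?thesis
  proof (cases "w = 0")
    case True
    thus ?thesis using C0 D0 unfolding w_def Ceq D_def[symmetric] by simp
  next
    case False
    define v where "v = w /\<^sub>R norm w"
    have nv: "norm v = 1" unfolding v_def using False by simp
    have nw: "norm w = inner v w" unfolding v_def using False
      by (simp add: power2_norm_eq_inner[symmetric] power2_eq_square)
    define Y where "Y l s = inner v (x l s)" for l s
    define M where "M = Max ((\<lambda>l. Y l a) ` {..<N})"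
    define m where "m = Min ((\<lambda>l. Y l a) ` {..<N})"
    have ne: "(\<lambda>l. Y l a) ` {..<N} \<noteq> {}" using i by auto
    obtain p where p: "p<N" "M = Y p a" using Max_in[OF _ ne] unfolding M_def by auto
    obtain q where q: "q<N" "m = Y q a" using Min_in[OF _ ne] unfolding m_def by auto
    have hM: "Y l a \<le> M" if "l<N" for l unfolding M_def using that by (intro Max_ge) auto
    have hm: "m \<le> Y l a" if "l<N" for l unfolding m_def using that by (intro Min_le) auto
    have cpos: "0 \<le> c j l s" if "j<N" "l<N" "s\<in>{a<..<b}" for j l s using cb[OF that] p0 by auto
    have inv1: "Y l s \<le> M" if "l<N" "s\<in>{a..b}" for l s
      unfolding Y_def by (rule invariance[OF cont deriv cpos N2 _ that]) (auto simp: hM[unfolded Y_def])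
    have inv2: "m \<le> Y l s" if "l<N" "s\<in>{a..b}" for l s
    proof -
      have "inner (-v) (x l s) \<le> - m"
        by (rule invariance[OF cont deriv cpos N2 _ that]) (auto simp: hm[unfolded Y_def])
      thus ?thesis unfolding Y_def by simp
    qed
    define D' where "D' = M - m"
    have D'D: "D' \<le> D"
    proof -
      have "D' = inner v (x p a - x q a)" unfolding D'_def p q Y_def by (simp add: inner_diff_right)
      also have "\<dots> \<le> norm v * norm (x p a - x q a)" by (rule norm_cauchy_schwarz)
      also have "\<dots> \<le> D" using Dge[OF p(1) q(1)] nv by simp
      finally show ?thesis .
    qed
    define u where "u s = (M - Y i s) + (Y k s - m)" for s
    define u' where "u' r = (1/(real N-1)) * (\<Sum>l\<in>{..<N}-{i}. c i l r * (Y i r - Y l r))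
        + (1/(real N-1)) * (\<Sum>l\<in>{..<N}-{k}. c k l r * (Y l r - Y k r))" for r
    have du: "(u has_real_derivative u' r) (at r)" if r: "r\<in>{a<..<b}" for r
    proof -
      have dY: "((\<lambda>s. Y j s) has_real_derivative (1/(real N-1)) * (\<Sum>l\<in>{..<N}-{j}. c j l r * (Y l r - Y j r))) (at r)"
        if "j<N" for j
      proof -
        have "((\<lambda>s. Y j s) has_real_derivative inner v ((1/(real N-1)) *\<^sub>R (\<Sum>l\<in>{..<N}-{j}. c j l r *\<^sub>R (x l r - x j r)))) (at r)"
          unfolding Y_def by (rule vd_inner[OF deriv[OF that r]])
        thus ?thesis unfolding Y_def by (simp add: inner_sum_right inner_diff_right)
      qed
      have "(u has_real_derivative (0 - (1/(real N-1)) * (\<Sum>l\<in>{..<N}-{i}. c i l r * (Y l r - Y i r)))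
          + ((1/(real N-1)) * (\<Sum>l\<in>{..<N}-{k}. c k l r * (Y l r - Y k r)) - 0)) (at r)"
        unfolding u_def[abs_def] by (intro derivative_intros dY i k)
      moreover have "(\<Sum>l\<in>{..<N}-{i}. c i l r * (Y i r - Y l r)) = - (\<Sum>l\<in>{..<N}-{i}. c i l r * (Y l r - Y i r))"
        by (simp add: sum_negf[symmetric] algebra_simps)
      ultimately show ?thesis unfolding u'_def by simp
    qed
    have ineq: "u' r \<ge> \<psi>0 * D' - L * u r" if r: "r\<in>{a<..<b}" for r
    proof -
      have rr: "r \<in> {a..b}" using r by auto
      show ?thesis unfolding u'_def u_def D'_def L_def
        by (rule key_ineq[OF N2 i k]) (use cb[OF i _ r] cb[OF k _ r] inv1[OF _ rr] inv2[OF _ rr] p0 in auto)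
    qed
    define g where "g s = exp (L*(s-a)) * u s - \<psi>0 * D' / L * exp (L*(s-a))" for s
    have "g a \<le> g b"
    proof (rule DERIV_nonneg_imp_increasing_open[OF less_imp_le[OF ab]])
      fix r assume "a < r" "r < b"
      hence r: "r\<in>{a<..<b}" by auto
      have "(g has_real_derivative (L * exp (L*(r-a)) * u r + exp (L*(r-a)) * u' r - \<psi>0 * D' / L * (L * exp (L*(r-a))))) (at r)"
        unfolding g_def[abs_def] by (auto intro!: derivative_eq_intros du[OF r])
      moreover have "L * exp (L*(r-a)) * u r + exp (L*(r-a)) * u' r - \<psi>0 * D' / L * (L * exp (L*(r-a)))
          = exp (L*(r-a)) * (u' r + L * u r - \<psi>0 * D')" using L0 by (simp add: field_simps)
      moreover have "exp (L*(r-a)) * (u' r + L * u r - \<psi>0 * D') \<ge> 0" using ineq[OF r] by simp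
      ultimately show "\<exists>y. (g has_real_derivative y) (at r) \<and> 0 \<le> y" by auto
    next
      show "continuous_on {a..b} g" unfolding g_def[abs_def] u_def[abs_def] Y_def
        using cont[OF i] cont[OF k] by (intro continuous_intros) auto
    qed
    moreover have "u a \<ge> 0" using hM[OF i] hm[OF k] unfolding u_def by auto
    ultimately have "E * u b - \<psi>0 * D' / L * E \<ge> - \<psi>0 * D' / L" unfolding g_def E_def by simp
    hence ub: "u b \<ge> \<psi>0 * D' / L * (1 - 1/E)"
    proof -
      assume h: "E * u b - \<psi>0 * D' / L * E \<ge> - \<psi>0 * D' / L"
      have "E * (\<psi>0 * D' / L * (1 - 1/E)) = \<psi>0 * D' / L * E - \<psi>0 * D' / L" using E1 L0 by (simp add: field_simps)
      hence "E * (u b - \<psi>0 * D' / L * (1 - 1/E)) \<ge> 0" using h by (simp add: right_diff_distrib)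
      thus ?thesis using E1 by (simp add: zero_le_mult_iff)
    qed
    have "norm (x i b - x k b) = Y i b - Y k b" unfolding Y_def using nw unfolding w_def by (simp add: inner_diff_right)
    also have "\<dots> = D' - u b" unfolding u_def D'_def by simp
    also have "\<dots> \<le> C * D'"
    proof -
      have "C * D' = D' - \<psi>0 * D' / L * (1 - 1/E)" unfolding C_def using E1 L0 by (simp add: field_simps)
      thus ?thesis using ub by linarith
    qed
    also have "\<dots> \<le> C * D" using D'D C0 by (rule mult_left_mono)
    finally show ?thesis unfolding Ceq D_def .
  qed
qed


lemma alpha_abs: "\<bar>alpha_sw t s\<bar> \<le> 1" unfolding alpha_sw_def by auto

lemma alpha_pos:
  assumes sm: "strict_mono t" and s: "t (2*n) < s" "s < t (2*n+1)"
  shows "alpha_sw t s = 1"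
proof -
  have "\<not> (t (2*m+1) \<le> s \<and> s \<le> t (2*m+2))" for m
  proof
    assume h: "t (2*m+1) \<le> s \<and> s \<le> t (2*m+2)"
    hence "t (2*m+1) < t (2*n+1)" using s by auto
    hence "2*m+1 < 2*n+1" using sm strict_mono_less by blast
    hence "2*m+2 \<le> 2*n" by auto
    hence "t (2*m+2) \<le> t (2*n)" using sm strict_mono_less_eq by blast
    thus False using h s by auto
  qed
  thus ?thesis unfolding alpha_sw_def by auto
qed

theorem proposition3p11:
  fixes \<psi> :: "'a::euclidean_space \<Rightarrow> 'a \<Rightarrow> real" and t :: "nat \<Rightarrow> real"
  assumes psi_pos: "\<And>y z. \<psi> y z > 0"
    and psi_bdd: "\<exists>B. \<forall>y z. \<psi> y z \<le> B"
    and psi_cont: "continuous_on UNIV (\<lambda>p. \<psi> (fst p) (snd p))"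
    and t0: "t 0 = 0" and t_mono: "strict_mono t"
    and t_inf: "filterlim t at_top sequentially"
    and neg_short: "\<And>n. t (2*n+2) - t (2*n+1) < ln 2 / psi_sup \<psi>"
    and sum_fin: "summable (\<lambda>p. ln (exp (psi_sup \<psi> * (t (2*p+2) - t (2*p+1)))
                                  / (2 - exp (psi_sup \<psi> * (t (2*p+2) - t (2*p+1))))))"
  shows "\<forall>n. \<forall>R. \<exists>C. 0 < C \<and> C < 1 \<and>
           (\<forall>N x. 2 \<le> N \<longrightarrow> is_solution N \<psi> t x \<longrightarrow> (\<forall>i<N. norm (x i 0) \<le> R) \<longrightarrow>
              filterlim (\<lambda>m. \<Sum>p<m. ln (max (1 - exp (- psi_sup \<psi> * (t (2*p+1) - t (2*p))))
                  (1 - psi_min \<psi> (M0 N (psi_sup \<psi>) t x) / psi_sup \<psi>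
                         * (1 - exp (- psi_sup \<psi> * (t (2*p+1) - t (2*p)))))))
                at_bot sequentially \<longrightarrow>
              diam_ag N x (t (2*n+1)) \<le> C * diam_ag N x (t (2*n)))"
proof (intro allI)
  fix n :: nat and R :: real
  define K where "K = psi_sup \<psi>"
  obtain B where B: "\<forall>y z. \<psi> y z \<le> B" using psi_bdd by blast
  have bdd: "bdd_above ((\<lambda>p. \<psi> (fst p) (snd p)) ` UNIV)" using B by (intro bdd_aboveI[where M = B]) auto
  have Kub: "\<psi> y z \<le> K" for y z
  proof -
    have "\<psi> (fst (y,z)) (snd (y,z)) \<le> K" unfolding K_def psi_sup_def by (rule cSUP_upper[OF _ bdd]) auto
    thus ?thesis by simp
  qed
  have K0: "K > 0" using Kub[of 0 0] psi_pos[of 0 0] by linarith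
  have cabs: "\<bar>alpha_sw t s * \<psi> y z\<bar> \<le> K" for s y z
  proof -
    have "\<bar>alpha_sw t s\<bar> * \<psi> y z \<le> 1 * K" using alpha_abs[of t s] Kub[of y z] psi_pos[of y z]
      by (intro mult_mono) auto
    thus ?thesis using psi_pos[of y z] by (simp add: abs_mult)
  qed
  have tge: "t k \<ge> 0" for k using t_mono strict_mono_less_eq[OF t_mono, of 0 k] t0 by auto
  have tlt: "t k < t (Suc k)" for k using t_mono by (simp add: strict_mono_Suc_iff)
  define c0 where "c0 = 2*K+1"
  define Mn where "Mn = \<bar>R\<bar> * exp (c0 * t (2*n+1))"
  have Mn0: "Mn \<ge> 0" unfolding Mn_def by simp
  define S where "S = cball (0::'a) Mn \<times> cball (0::'a) Mn"
  have Sc: "compact S" unfolding S_def by (intro compact_Times compact_cball)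
  have Sne: "S \<noteq> {}" unfolding S_def using Mn0 by auto
  obtain p0 where p0: "p0 \<in> S" "\<And>q. q \<in> S \<Longrightarrow> \<psi> (fst p0) (snd p0) \<le> \<psi> (fst q) (snd q)"
    using continuous_attains_inf[OF Sc Sne continuous_on_subset[OF psi_cont]] by blast
  define \<psi>0 where "\<psi>0 = \<psi> (fst p0) (snd p0)"
  have psi0: "\<psi>0 > 0" unfolding \<psi>0_def using psi_pos by simp
  have psi0_le: "\<psi>0 \<le> \<psi> y z" if "norm y \<le> Mn" "norm z \<le> Mn" for y z
    using p0(2)[of "(y,z)"] that unfolding \<psi>0_def S_def by auto
  define a where "a = t (2*n)"
  define b where "b = t (2*n+1)"
  have ab: "a < b" unfolding a_def b_def using tlt[of "2*n"] by simp
  define C where "C = (1 - \<psi>0/(\<psi>0+K) * (1 - exp (-(\<psi>0+K)*(b-a))))"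
  have C01: "0 < C \<and> C < 1"
  proof -
    have e: "exp (-(\<psi>0+K)*(b-a)) < 1" "exp (-(\<psi>0+K)*(b-a)) > 0" using ab psi0 K0 by (auto simp: mult_neg_pos)
    have q: "\<psi>0/(\<psi>0+K) < 1" "\<psi>0/(\<psi>0+K) > 0" using psi0 K0 by auto
    have "\<psi>0/(\<psi>0+K) * (1 - exp (-(\<psi>0+K)*(b-a))) < 1 * 1"
      using e q by (intro mult_strict_mono) auto
    moreover have "\<psi>0/(\<psi>0+K) * (1 - exp (-(\<psi>0+K)*(b-a))) > 0" using e q by (metis mult_pos_pos diff_gt_0_iff_gt)
    ultimately show ?thesis unfolding C_def by auto
  qed
  show "\<exists>C. 0 < C \<and> C < 1 \<and>
           (\<forall>N x. 2 \<le> N \<longrightarrow> is_solution N \<psi> t x \<longrightarrow> (\<forall>i<N. norm (x i 0) \<le> R) \<longrightarrow>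
              filterlim (\<lambda>m. \<Sum>p<m. ln (max (1 - exp (- psi_sup \<psi> * (t (2*p+1) - t (2*p))))
                  (1 - psi_min \<psi> (M0 N (psi_sup \<psi>) t x) / psi_sup \<psi>
                         * (1 - exp (- psi_sup \<psi> * (t (2*p+1) - t (2*p)))))))
                at_bot sequentially \<longrightarrow>
              diam_ag N x (t (2*n+1)) \<le> C * diam_ag N x (t (2*n)))"
  proof (intro exI[of _ C] conjI allI impI)
    show "0 < C" "C < 1" using C01 by auto
    fix N :: nat and x :: "nat \<Rightarrow> real \<Rightarrow> 'a"
    assume N2: "2 \<le> N" and sol: "is_solution N \<psi> t x" and R: "\<forall>i<N. norm (x i 0) \<le> R"
    have xc: "continuous_on {0..} (x i)" if "i<N" for i using sol that unfolding is_solution_def by auto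
    have xd: "(x i has_vector_derivative
           ((1 / (real N - 1)) *\<^sub>R
             (\<Sum>j\<in>{..<N}-{i}. (alpha_sw t s * \<psi> (x i s) (x j s)) *\<^sub>R (x j s - x i s)))) (at s)"
      if "i<N" "s\<in>{t k<..<t (Suc k)}" for i k s using sol that unfolding is_solution_def by auto
    have xck: "continuous_on {t k..t (Suc k)} (x i)" if "i<N" for i k
      using xc[OF that] by (rule continuous_on_subset) (use tge[of k] in auto)
    have bnd: "\<forall>i<N. norm (x i (t k)) \<le> \<bar>R\<bar> * exp (c0 * t k)" for k
    proof (induction k)
      case 0 thus ?case using R t0 by auto
    next
      case (Suc k)
      show ?case
      proof (intro allI impI)
        fix i assume i: "i<N"
        have "norm (x i (t (Suc k))) \<le> (\<bar>R\<bar> * exp (c0 * t k)) * exp ((2*K+1)*(t (Suc k) - t k))"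
          apply (rule phase_bound[where c = "\<lambda>j l s. alpha_sw t s * \<psi> (x j s) (x l s)" and K = K, OF xck xd _ N2 _ _ _ i])
          using Suc.IH K0 tlt[of k] cabs by auto
        also have "\<dots> = \<bar>R\<bar> * exp (c0 * t (Suc k))" unfolding c0_def by (simp add: mult_exp_exp algebra_simps)
        finally show "norm (x i (t (Suc k))) \<le> \<bar>R\<bar> * exp (c0 * t (Suc k))" .
      qed
    qed
    have inphase: "norm (x i s) \<le> Mn" if i: "i<N" and s: "s \<in> {a..b}" for i s
    proof -
      have "norm (x i s) \<le> (\<bar>R\<bar> * exp (c0 * t (2*n))) * exp ((2*K+1)*(s - t (2*n)))"
        apply (rule phase_bound[where c = "\<lambda>j l s. alpha_sw t s * \<psi> (x j s) (x l s)" and K = K and a = "t (2*n)" and b = "t (Suc (2*n))", OF xck xd _ N2 _ _ _ i])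
        using bnd[of "2*n"] K0 cabs s unfolding a_def b_def by auto
      also have "\<dots> = \<bar>R\<bar> * exp (c0 * s)" unfolding c0_def by (simp add: mult_exp_exp algebra_simps)
      also have "\<dots> \<le> Mn" unfolding Mn_def using s K0 unfolding b_def c0_def
        by (intro mult_left_mono) auto
      finally show ?thesis .
    qed
    have pair: "norm (x i b - x k b) \<le> C * diam_ag N x a" if i: "i<N" and k: "k<N" for i k
      unfolding C_def
    proof (rule contraction[where c = "\<lambda>j l s. \<psi> (x j s) (x l s)", OF _ _ _ N2 psi0 K0 ab i k])
      show "continuous_on {a..b} (x j)" if "j<N" for j unfolding a_def b_def using xck[OF that, of "2*n"] by simp
      show "(x j has_vector_derivative (1/(real N-1)) *\<^sub>R (\<Sum>l\<in>{..<N}-{j}. \<psi> (x j s) (x l s) *\<^sub>R (x l s - x j s))) (at s)"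
        if "j<N" "s\<in>{a<..<b}" for j s
        using xd[OF that(1), of s "2*n"] that(2) alpha_pos[OF t_mono, of n s] unfolding a_def b_def by auto
      show "\<psi>0 \<le> \<psi> (x j s) (x l s) \<and> \<psi> (x j s) (x l s) \<le> K" if "j<N" "l<N" "s\<in>{a<..<b}" for j l s
        using psi0_le[OF inphase inphase] Kub that by auto
    qed
    have fin: "finite {norm (x i (t (2*n+1)) - x j (t (2*n+1))) | i j. i < N \<and> j < N}" by (rule finite_pairs)
    have ne: "{norm (x i (t (2*n+1)) - x j (t (2*n+1))) | i j. i < N \<and> j < N} \<noteq> {}"
    proof -
      have "0 < N" using N2 by auto
      thus ?thesis by blast
    qed
    show "diam_ag N x (t (2*n+1)) \<le> C * diam_ag N x (t (2*n))"
      unfolding diam_ag_def[of N x "t (2*n+1)"]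
    proof (rule Max.boundedI[OF fin ne])
      fix y assume "y \<in> {norm (x i (t (2*n+1)) - x j (t (2*n+1))) | i j. i < N \<and> j < N}"
      then obtain i j where "i<N" "j<N" "y = norm (x i (t (2*n+1)) - x j (t (2*n+1)))" by blast
      thus "y \<le> C * diam_ag N x (t (2*n))" using pair[of i j] unfolding a_def b_def by simp
    qed
  qed
qed
end
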